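(* Let $\mathtt{a}\in\Sigma$ and $p,q,k\in\mathbb{N}$ with $p,q,k\ge 1$. If $\mathtt{a}^p\equiv_{k+3}\mathtt{a}^q$, then $w^p\equiv_k w^q$ for every primitive word $w\in\Sigma^+$.
   Context: $\Sigma$ is a fixed finite alphabet. A word $w\in\Sigma^+$ is primitive if there is no $z\in\Sigma^*$ and $k>1$ with $w=z^k$. For $w \in \Sigma^*$, $\mathsf{Facs}(w)$ is the set of all factors (contiguous subwords, including $\varepsilon$ and $w$) of $w$. The structure $\mathfrak{A}_w$ representing $w$ has universe $\mathsf{Facs}(w)\cup\{\perp\}$, a ternary relation $R_\circ=\{(x,y,z)\in\mathsf{Facs}(w)^3 : x=y\cdot z\}$, for each letter $\mathtt{a}\in\Sigma$ a constant interpreted as $\mathtt{a}$ if $\mathtt{a}$ occurs in $w$ and as $\perp$ otherwise, and a constant $\varepsilon$ interpreted as the empty word. The $k$-round Ehrenfeucht–Fraïssé game on $\mathfrak{A}_w,\mathfrak{A}_v$: in each round $i$, Spoiler picks one of the two structures and an element of its universe, Duplicator answers with an element of the other structure's universe; let $a_i$ (in $\mathfrak{A}_w$) and $b_i$ (in $\mathfrak{A}_v$) be the chosen elements. Duplicator wins if the tuples $(a_1,\dots,a_k,\vec c^{\,\mathfrak{A}_w})$ and $(b_1,\dots,b_k,\vec c^{\,\mathfrak{A}_v})$, where $\vec c$ lists the interpretations of all constants, form a partial isomorphism: for all indices $i,j,l$, $a_i$ equals the interpretation of a constant $c$ iff $b_i$ equals the interpretation of $c$; $a_i=a_j$ iff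 $b_i=b_j$; and $a_i=a_j\cdot a_l$ iff $b_i=b_j\cdot b_l$. We write $w\equiv_k v$ if Duplicator has a winning strategy in the $k$-round game. *)

theory Defs
  imports Main "HOL-Library.Sublist"
begin

text \<open>Words over the alphabet (the finite type 'a) are lists. Elements of the
structure A_w are 'a list option: Some u for a factor u of w, None for bottom.\<close>

definition primitive :: "'a list \<Rightarrow> bool" where
  "primitive w \<longleftrightarrow> w \<noteq> [] \<and> \<not> (\<exists>z k. k > 1 \<and> w = concat (replicate k z))"

definition wpow :: "'a list \<Rightarrow> nat \<Rightarrow> 'a list" where
  "wpow w n = concat (replicate n w)"

definition Facs :: "'a list \<Rightarrow> 'a list set" where
  "Facs w = {u. sublist u w}"

definition univ :: "'a list \<Rightarrow> 'a list option set" where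
  "univ w = Some ` Facs w \<union> {None}"

text \<open>Constants: None stands for the constant epsilon, Some a for the letter a.\<close>
definition cinterp :: "'a list \<Rightarrow> 'a option \<Rightarrow> 'a list option" where
  "cinterp w c = (case c of None \<Rightarrow> Some []
                   | Some a \<Rightarrow> (if a \<in> set w then Some [a] else None))"

definition ext :: "'a list \<Rightarrow> 'a list option list \<Rightarrow> (nat + 'a option) \<Rightarrow> 'a list option" where
  "ext w xs idx = (case idx of Inl i \<Rightarrow> xs ! i | Inr c \<Rightarrow> cinterp w c)"

definition idxs :: "nat \<Rightarrow> (nat + 'a option) set" where
  "idxs n = Inl ` {..<n} \<union> range Inr"

definition concat_rel :: "'a list option \<Rightarrow> 'a list option \<Rightarrow> 'a list option \<Rightarrow> bool" where
  "concat_rel x y z \<longleftrightarrow> (\<exists>x' y' z'. x = Some x' \<and> y = Some y' \<and> z = Some z' \<and> x' = y' @ z')"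

definition partial_iso :: "'a list \<Rightarrow> 'a list \<Rightarrow> 'a list option list \<Rightarrow> 'a list option list \<Rightarrow> bool" where
  "partial_iso w v xs ys \<longleftrightarrow> length xs = length ys \<and>
     (\<forall>i \<in> idxs (length xs). \<forall>j \<in> idxs (length xs). \<forall>l \<in> idxs (length xs).
        (ext w xs i = ext w xs j \<longleftrightarrow> ext v ys i = ext v ys j) \<and>
        (concat_rel (ext w xs i) (ext w xs j) (ext w xs l) \<longleftrightarrow>
         concat_rel (ext v ys i) (ext v ys j) (ext v ys l)))"

fun dup_wins :: "nat \<Rightarrow> 'a list \<Rightarrow> 'a list \<Rightarrow> 'a list option list \<Rightarrow> 'a list option list \<Rightarrow> bool" where
  "dup_wins 0 w v xs ys = partial_iso w v xs ys"
| "dup_wins (Suc n) w v xs ys =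
     ((\<forall>x \<in> univ w. \<exists>y \<in> univ v. dup_wins n w v (xs @ [x]) (ys @ [y])) \<and>
      (\<forall>y \<in> univ v. \<exists>x \<in> univ w. dup_wins n w v (xs @ [x]) (ys @ [y])))"

definition ef_equiv :: "nat \<Rightarrow> 'a list \<Rightarrow> 'a list \<Rightarrow> bool" where
  "ef_equiv k w v \<longleftrightarrow> dup_wins k w v [] []"

end

theory Submission
  imports Defs
begin


definition fac :: "'a list \<Rightarrow> nat \<Rightarrow> nat \<Rightarrow> 'a list" where
  "fac w i L = map (\<lambda>k. w ! ((i + k) mod length w)) [0..<L]"

lemma fac_len[simp]: "length (fac w i L) = L" by (simp add: fac_def)

lemma fac_nth: "k < L \<Longrightarrow> fac w i L ! k = w ! ((i + k) mod length w)"
  by (simp add: fac_def)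

lemma fac_eq_iff: "fac w i L = fac w j L \<longleftrightarrow> (\<forall>k<L. w ! ((i + k) mod length w) = w ! ((j + k) mod length w))"
  by (auto simp: list_eq_iff_nth_eq fac_nth)

lemma fac_append: "fac w i (a + b) = fac w i a @ fac w (i + a) b"
  by (rule nth_equalityI) (auto simp: fac_nth nth_append add.assoc)

lemma fac_mod: "fac w (i mod length w) L = fac w i L"
  by (simp add: fac_def mod_add_left_eq)

lemma fac_prefix: "fac w i L = fac w j L \<Longrightarrow> L' \<le> L \<Longrightarrow> fac w i L' = fac w j L'"
  by (auto simp: fac_eq_iff)

lemma fac_period:
  assumes "w \<noteq> []" "fac w i L = fac w j L" "L \<ge> length w"
  shows "fac w i L' = fac w j L'"
proof -
  let ?n = "length w"
  have n: "?n > 0" using assms by simp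
  have h: "\<forall>k<?n. w ! ((i + k) mod ?n) = w ! ((j + k) mod ?n)" using assms(2,3) by (auto simp: fac_eq_iff)
  show ?thesis unfolding fac_eq_iff
  proof (intro allI impI)
    fix k assume "k < L'"
    have "w ! ((i + k mod ?n) mod ?n) = w ! ((j + k mod ?n) mod ?n)" using h n by simp
    thus "w ! ((i + k) mod ?n) = w ! ((j + k) mod ?n)" by (simp add: mod_add_right_eq)
  qed
qed

lemma fac_min:
  assumes "w \<noteq> []"
  shows "fac w i L = fac w j L \<longleftrightarrow> fac w i (min L (length w)) = fac w j (min L (length w))"
  using fac_prefix fac_period[OF assms] by (metis min.cobounded1 min_def)

lemma wpow_nth: "x < M * length w \<Longrightarrow> wpow w M ! x = w ! (x mod length w)"
proof (induction M arbitrary: x)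
  case 0 then show ?case by simp
next
  case (Suc M)
  have e: "wpow w (Suc M) = w @ wpow w M" by (simp add: wpow_def)
  show ?case
  proof (cases "x < length w")
    case True then show ?thesis by (simp add: e nth_append)
  next
    case False
    then have "x - length w < M * length w" using Suc.prems by simp
    then show ?thesis using False Suc.IH[of "x - length w"] by (simp add: e nth_append mod_if le_mod_geq)
  qed
qed

lemma wpow_len[simp]: "length (wpow w M) = M * length w"
  by (simp add: wpow_def length_concat sum_list_replicate)

lemma fac_sublist:
  assumes "i + L \<le> M * length w"
  shows "sublist (fac w i L) (wpow w M)"
proof -
  have "fac w i L = take L (drop i (wpow w M))"
    using assms by (auto simp: list_eq_iff_nth_eq fac_nth wpow_nth)
  then show ?thesis by (metis sublist_drop sublist_order.dual_order.trans sublist_take)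
qed

lemma sublist_fac:
  assumes "sublist u (wpow w p)"
  shows "\<exists>s. s + length u \<le> p * length w \<and> u = fac w s (length u)"
proof -
  obtain ps ss where e: "wpow w p = ps @ u @ ss" using assms by (auto simp: sublist_def)
  have len: "length ps + length u \<le> p * length w" using arg_cong[OF e, of length] by simp
  have "u = fac w (length ps) (length u)"
  proof (rule nth_equalityI)
    fix k assume k: "k < length u"
    have "wpow w p ! (length ps + k) = u ! k" by (simp add: e nth_append k)
    moreover have "wpow w p ! (length ps + k) = w ! ((length ps + k) mod length w)"
      using len k by (intro wpow_nth) simp
    ultimately show "u ! k = fac w (length ps) (length u) ! k" using k by (simp add: fac_nth)
  qed simp
  then show ?thesis using len by blast
qed




definition canon :: "'a list \<Rightarrow> nat \<Rightarrow> nat \<Rightarrow> nat \<Rightarrow> bool" where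
  "canon w i g M \<longleftrightarrow> i < length w \<and> g < length w \<and> i + g \<le> M * length w \<and>
     (\<forall>i'<i. fac w i' (M * length w - i - g) \<noteq> fac w i (M * length w - i - g))"

lemma encode:
  assumes "w \<noteq> []" "sublist u (wpow w p)"
  shows "\<exists>i g M. canon w i g M \<and> M \<le> p \<and> u = fac w i (M * length w - i - g)"
proof -
  let ?n = "length w" let ?L = "length u"
  have n: "?n > 0" using assms by simp
  obtain s where s: "s + ?L \<le> p * ?n" "u = fac w s ?L" using sublist_fac[OF assms(2)] by blast
  let ?r = "s mod ?n"
  have ur: "fac w ?r ?L = u" using s by (simp add: fac_mod)
  define i where "i = (LEAST i. fac w i ?L = u)"
  have fi: "fac w i ?L = u" unfolding i_def by (rule LeastI[of _ ?r]) (rule ur)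
  have ir: "i \<le> ?r" unfolding i_def by (rule Least_le) (rule ur)
  have rn: "?r < ?n" using n by simp
  have min: "\<forall>i'<i. fac w i' ?L \<noteq> u" unfolding i_def using not_less_Least by blast
  define M where "M = (i + ?L + ?n - 1) div ?n"
  have d: "(i + ?L + ?n - 1) = M * ?n + (i + ?L + ?n - 1) mod ?n" unfolding M_def by simp
  have m: "(i + ?L + ?n - 1) mod ?n < ?n" using n by simp
  have ge: "i + ?L \<le> M * ?n" using d m by linarith
  have le: "M * ?n \<le> i + ?L + ?n - 1" using d by linarith
  have sdec: "s = (s div ?n) * ?n + ?r" by simp
  have A: "?r + ?L \<le> p * ?n" using s(1) sdec by linarith
  have "M * ?n < p * ?n + ?n" using le ir n A by linarith
  then have "M * ?n < (p + 1) * ?n" by simp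
  then have Mp: "M \<le> p" using n by (metis Suc_eq_plus1 less_Suc_eq_le mult_less_cancel2)
  define g where "g = M * ?n - (i + ?L)"
  have g: "g < ?n" using le ge n unfolding g_def by linarith
  have L: "M * ?n - i - g = ?L" using ge unfolding g_def by simp
  have "canon w i g M" unfolding canon_def L using ir rn g ge min fi unfolding g_def by auto
  then show ?thesis using Mp L fi by metis
qed

lemma canon_inj:
  assumes "canon w i1 g1 M1" "canon w i2 g2 M2"
    and e: "fac w i1 (M1 * length w - i1 - g1) = fac w i2 (M2 * length w - i2 - g2)"
  shows "i1 = i2 \<and> g1 = g2 \<and> M1 = M2"
proof -
  let ?n = "length w"
  have L: "M1 * ?n - i1 - g1 = M2 * ?n - i2 - g2" using arg_cong[OF e, of length] by simp
  have i: "i1 = i2"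
  proof (rule ccontr)
    assume "i1 \<noteq> i2"
    then consider "i1 < i2" | "i2 < i1" by linarith
    then show False using assms e L unfolding canon_def by metis
  qed
  have a: "M1 * ?n - g1 = M2 * ?n - g2" using L i assms unfolding canon_def by linarith
  have M: "M1 = M2"
  proof (rule ccontr)
    assume "M1 \<noteq> M2"
    then consider "M1 < M2" | "M2 < M1" by linarith
    then show False
    proof cases
      case 1
      then have "M1 * ?n + ?n \<le> M2 * ?n" by (metis Suc_leI mult_Suc mult_le_mono1 add.commute)
      then show False using a assms unfolding canon_def by linarith
    next
      case 2
      then have "M2 * ?n + ?n \<le> M1 * ?n" by (metis Suc_leI mult_Suc mult_le_mono1 add.commute)
      then show False using a assms unfolding canon_def by linarith
    qed
  qed
  show ?thesis using a i M assms unfolding canon_def by auto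
qed

lemma bigL:
  assumes "canon w i g M" "M \<ge> 3"
  shows "M * length w - i - g \<ge> length w"
proof -
  have "3 * length w \<le> M * length w" using assms(2) by simp
  then show ?thesis using assms(1) unfolding canon_def by linarith
qed

lemma canon_transfer:
  assumes w: "w \<noteq> []" and c: "canon w i g M" and m: "min M 3 = min M' 3"
  shows "canon w i g M'"
proof (cases "M = M'")
  case True then show ?thesis using c by simp
next
  case False
  then have M: "M \<ge> 3" "M' \<ge> 3" using m by (auto simp: min_def split: if_splits)
  let ?n = "length w"
  have ig: "i < ?n" "g < ?n" using c unfolding canon_def by auto
  have "3 * ?n \<le> M' * ?n" using M by simp
  then have b: "i + g \<le> M' * ?n" using ig by linarith
  have L1: "M * ?n - i - g \<ge> ?n" using bigL[OF c M(1)] .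
  have L2: "M' * ?n - i - g \<ge> ?n" using \<open>3 * ?n \<le> M' * ?n\<close> ig by linarith
  have "\<forall>i'<i. fac w i' (M' * ?n - i - g) \<noteq> fac w i (M' * ?n - i - g)"
  proof (intro allI impI)
    fix i' assume "i' < i"
    then have "fac w i' (M * ?n - i - g) \<noteq> fac w i (M * ?n - i - g)" using c unfolding canon_def by auto
    then show "fac w i' (M' * ?n - i - g) \<noteq> fac w i (M' * ?n - i - g)"
      using fac_min[OF w, of i' _ i] L1 L2 by (metis min.absorb2)
  qed
  then show ?thesis using ig b unfolding canon_def by auto
qed




lemma fac_shift: "fac w (x + k * length w) L = fac w x L"
  by (metis fac_mod mod_mult_self1)

lemma concat_char:
  assumes w: "w \<noteq> []"
  shows "fac w iI LI = fac w iJ LJ @ fac w iK LK \<longleftrightarrow>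
    LI = LJ + LK \<and> fac w iI (min LJ (length w)) = fac w iJ (min LJ (length w)) \<and>
    fac w (iI + LJ) (min LK (length w)) = fac w iK (min LK (length w))"
proof (cases "LI = LJ + LK")
  case True
  then have "fac w iI LI = fac w iI LJ @ fac w (iI + LJ) LK" by (simp add: fac_append)
  then show ?thesis using True fac_min[OF w] by simp
next
  case False
  then show ?thesis by (metis fac_len length_append)
qed

definition LL :: "'a list \<Rightarrow> nat \<Rightarrow> nat \<Rightarrow> nat \<Rightarrow> nat" where
  "LL w i g M = M * length w - i - g"

lemma min_L:
  assumes "canon w i g M" "canon w i g M'" "min M 3 = min M' 3"
  shows "min (LL w i g M) (length w) = min (LL w i g M') (length w)"
proof (cases "M = M'")
  case False
  then have "M \<ge> 3" "M' \<ge> 3" using assms(3) by (auto simp: min_def split: if_splits)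
  then show ?thesis using bigL assms unfolding LL_def by (metis min.absorb2)
qed simp

lemma shift_L:
  assumes "canon w i g M" "canon w i g M'"
  shows "fac w (x + LL w i g M) L = fac w (x + LL w i g M') L"
proof -
  have a: "i + g \<le> M * length w" "i + g \<le> M' * length w" using assms unfolding canon_def by auto
  show ?thesis
  proof (cases "M \<le> M'")
    case True
    then have "M' * length w = M * length w + (M' - M) * length w"
      by (simp add: diff_mult_distrib)
    then have "x + LL w i g M' = x + LL w i g M + (M' - M) * length w" using a unfolding LL_def by linarith
    then show ?thesis by (metis add.assoc fac_shift)
  next
    case False
    then have "M * length w = M' * length w + (M - M') * length w"
      by (simp add: diff_mult_distrib)
    then have "x + LL w i g M = x + LL w i g M' + (M - M') * length w" using a unfolding LL_def by linarith
    then show ?thesis by (metis add.assoc fac_shift)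
  qed
qed

lemma len_rel:
  assumes w: "w \<noteq> []"
    and cI: "canon w iI gI MI" "canon w iI gI MI'"
    and cJ: "canon w iJ gJ MJ" "canon w iJ gJ MJ'"
    and cK: "canon w iK gK MK" "canon w iK gK MK'"
    and R: "\<forall>c::int. -3 \<le> c \<and> c \<le> 1 \<longrightarrow> (int MI = int MJ + int MK + c \<longleftrightarrow> int MI' = int MJ' + int MK' + c)"
  shows "LL w iI gI MI = LL w iJ gJ MJ + LL w iK gK MK \<longleftrightarrow> LL w iI gI MI' = LL w iJ gJ MJ' + LL w iK gK MK'"
proof -
  let ?n = "int (length w)"
  have n: "?n > 0" using w by simp
  have b: "iI < length w" "gI < length w" "iJ < length w" "gJ < length w" "iK < length w" "gK < length w"
    using cI cJ cK unfolding canon_def by auto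
  define D where "D = int iI + int gI - int iJ - int gJ - int iK - int gK"
  have Db: "D < 2 * ?n" "- 4 * ?n < D" using b unfolding D_def by linarith+
  have key: "\<And>A B C. canon w iI gI A \<Longrightarrow> canon w iJ gJ B \<Longrightarrow> canon w iK gK C \<Longrightarrow>
     (LL w iI gI A = LL w iJ gJ B + LL w iK gK C \<longleftrightarrow> (int A - int B - int C) * ?n = D)"
  proof -
    fix A B C assume a: "canon w iI gI A" "canon w iJ gJ B" "canon w iK gK C"
    have "int (LL w iI gI A) = int A * ?n - int iI - int gI" "int (LL w iJ gJ B) = int B * ?n - int iJ - int gJ"
      "int (LL w iK gK C) = int C * ?n - int iK - int gK"
      using a unfolding LL_def canon_def by (auto simp: of_nat_diff)
    then show "(LL w iI gI A = LL w iJ gJ B + LL w iK gK C \<longleftrightarrow> (int A - int B - int C) * ?n = D)"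
      unfolding D_def by (simp add: algebra_simps) linarith
  qed
  have small: "\<And>X. X * ?n = D \<Longrightarrow> -3 \<le> X \<and> X \<le> 1"
  proof -
    fix X assume X: "X * ?n = D"
    show "-3 \<le> X \<and> X \<le> 1"
    proof (rule ccontr)
      assume "\<not> (-3 \<le> X \<and> X \<le> 1)"
      then consider "X \<ge> 2" | "X \<le> -4" by linarith
      then show False
      proof cases
        case 1 then have "X * ?n \<ge> 2 * ?n" using n by (intro mult_right_mono) auto
        then show False using X Db by linarith
      next
        case 2 then have "X * ?n \<le> -4 * ?n" using n by (intro mult_right_mono) auto
        then show False using X Db by linarith
      qed
    qed
  qed
  show ?thesis
  proof
    assume "LL w iI gI MI = LL w iJ gJ MJ + LL w iK gK MK"
    then have e: "(int MI - int MJ - int MK) * ?n = D" using key cI cJ cK by blast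
    have "int MI' = int MJ' + int MK' + (int MI - int MJ - int MK)"
      using R small[OF e] by (metis add.commute diff_add_cancel diff_diff_eq)
    then have X: "int MI' - int MJ' - int MK' = int MI - int MJ - int MK" by linarith
    have "(int MI' - int MJ' - int MK') * ?n = D" using e by (simp only: X)
    then show "LL w iI gI MI' = LL w iJ gJ MJ' + LL w iK gK MK'" using key cI cJ cK by blast
  next
    assume "LL w iI gI MI' = LL w iJ gJ MJ' + LL w iK gK MK'"
    then have e: "(int MI' - int MJ' - int MK') * ?n = D" using key cI cJ cK by blast
    have "int MI = int MJ + int MK + (int MI' - int MJ' - int MK')"
      using R small[OF e] by (metis add.commute diff_add_cancel diff_diff_eq)
    then have X: "int MI - int MJ - int MK = int MI' - int MJ' - int MK'" by linarith
    have "(int MI - int MJ - int MK) * ?n = D" using e by (simp only: X)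
    then show "LL w iI gI MI = LL w iJ gJ MJ + LL w iK gK MK" using key cI cJ cK by blast
  qed
qed

lemma core_concat:
  assumes w: "w \<noteq> []"
    and cI: "canon w iI gI MI" "canon w iI gI MI'"
    and cJ: "canon w iJ gJ MJ" "canon w iJ gJ MJ'"
    and cK: "canon w iK gK MK" "canon w iK gK MK'"
    and mJ: "min MJ 3 = min MJ' 3" and mK: "min MK 3 = min MK' 3"
    and R: "\<forall>c::int. -3 \<le> c \<and> c \<le> 1 \<longrightarrow> (int MI = int MJ + int MK + c \<longleftrightarrow> int MI' = int MJ' + int MK' + c)"
  shows "fac w iI (LL w iI gI MI) = fac w iJ (LL w iJ gJ MJ) @ fac w iK (LL w iK gK MK) \<longleftrightarrow>
         fac w iI (LL w iI gI MI') = fac w iJ (LL w iJ gJ MJ') @ fac w iK (LL w iK gK MK')"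
  unfolding concat_char[OF w]
  using len_rel[OF w cI cJ cK R] min_L[OF cJ mJ] min_L[OF cK mK] shift_L[OF cJ, of iI]
  by simp




lemma idxs_iff: "I \<in> idxs n \<longleftrightarrow> (case I of Inl i \<Rightarrow> i < n | Inr _ \<Rightarrow> True)"
  by (cases I) (auto simp: idxs_def)

lemma idxs_Suc: "I \<in> idxs n \<Longrightarrow> I \<in> idxs (Suc n)"
  by (auto simp: idxs_iff split: sum.splits)

lemma idxs_last: "Inl n \<in> idxs (Suc n)" by (simp add: idxs_iff)

lemma ext_snoc: "I \<in> idxs (length xs) \<Longrightarrow> ext w (xs @ [x]) I = ext w xs I"
  by (auto simp: ext_def idxs_iff nth_append split: sum.splits)

lemma ext_last: "ext w (xs @ [x]) (Inl (length xs)) = x"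
  by (simp add: ext_def)

lemma partial_iso_sym: "partial_iso w v xs ys \<Longrightarrow> partial_iso v w ys xs"
  unfolding partial_iso_def by auto

lemma dup_wins_sym: "dup_wins n w v xs ys \<Longrightarrow> dup_wins n v w ys xs"
  by (induction n arbitrary: xs ys) (simp add: partial_iso_sym, simp, blast)

lemma partial_iso_snoc: "partial_iso w v (xs @ [x]) (ys @ [y]) \<Longrightarrow> partial_iso w v xs ys"
proof -
  assume a: "partial_iso w v (xs @ [x]) (ys @ [y])"
  then have l: "length xs = length ys" unfolding partial_iso_def by simp
  show ?thesis unfolding partial_iso_def
  proof (rule conjI[OF l], intro ballI)
    fix i j k :: "nat + 'a option" assume ijk: "i \<in> idxs (length xs)" "j \<in> idxs (length xs)" "k \<in> idxs (length xs)"
    then have "i \<in> idxs (length (xs @ [x]))" "j \<in> idxs (length (xs @ [x]))" "k \<in> idxs (length (xs @ [x]))"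
      by (auto intro: idxs_Suc)
    then have "(ext w (xs@[x]) i = ext w (xs@[x]) j \<longleftrightarrow> ext v (ys@[y]) i = ext v (ys@[y]) j) \<and>
        (concat_rel (ext w (xs@[x]) i) (ext w (xs@[x]) j) (ext w (xs@[x]) k) \<longleftrightarrow>
         concat_rel (ext v (ys@[y]) i) (ext v (ys@[y]) j) (ext v (ys@[y]) k))"
      using a unfolding partial_iso_def by blast
    then show "(ext w xs i = ext w xs j \<longleftrightarrow> ext v ys i = ext v ys j) \<and>
        (concat_rel (ext w xs i) (ext w xs j) (ext w xs k) \<longleftrightarrow>
         concat_rel (ext v ys i) (ext v ys j) (ext v ys k))"
      using ijk l by (simp add: ext_snoc)
  qed
qed

lemma None_univ: "None \<in> univ w" by (simp add: univ_def)

lemma dup_wins_pi: "dup_wins n w v xs ys \<Longrightarrow> partial_iso w v xs ys"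
proof (induction n arbitrary: xs ys)
  case (Suc n)
  then obtain y where "dup_wins n w v (xs @ [None]) (ys @ [y])" using None_univ by fastforce
  then show ?case using Suc.IH partial_iso_snoc by blast
qed simp

lemma pi_len: "partial_iso w v xs ys \<Longrightarrow> length xs = length ys"
  by (simp add: partial_iso_def)

lemma pi_eq: "partial_iso w v xs ys \<Longrightarrow> I \<in> idxs (length xs) \<Longrightarrow> J \<in> idxs (length xs) \<Longrightarrow>
   ext w xs I = ext w xs J \<longleftrightarrow> ext v ys I = ext v ys J"
  unfolding partial_iso_def by blast

lemma pi_cc: "partial_iso w v xs ys \<Longrightarrow> I \<in> idxs (length xs) \<Longrightarrow> J \<in> idxs (length xs) \<Longrightarrow> K \<in> idxs (length xs) \<Longrightarrow>
   concat_rel (ext w xs I) (ext w xs J) (ext w xs K) \<longleftrightarrow> concat_rel (ext v ys I) (ext v ys J) (ext v ys K)"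
  unfolding partial_iso_def by blast




lemma sublist_rep: "sublist u (replicate p a) \<Longrightarrow> u = replicate (length u) a \<and> length u \<le> p"
proof -
  assume s: "sublist u (replicate p a)"
  then have "set u \<subseteq> set (replicate p a)" by (rule set_mono_sublist)
  then have "\<forall>y\<in>set u. y = a" by auto
  then have "replicate (length u) a = u" by (rule replicate_length_same)
  moreover have "length u \<le> p" using sublist_length_le[OF s] by simp
  ultimately show ?thesis by simp
qed

lemma rep_sublist: "M \<le> p \<Longrightarrow> sublist (replicate M a) (replicate p a)"
proof -
  assume "M \<le> p"
  then have "replicate p a = replicate M a @ replicate (p - M) a" by (metis le_add_diff_inverse replicate_add)
  then show ?thesis by (metis prefixI prefix_imp_sublist)
qed

lemma univ_rep: "x \<in> univ (replicate p a) \<longleftrightarrow> x = None \<or> (\<exists>M\<le>p. x = Some (replicate M a))"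
proof
  assume "x \<in> univ (replicate p a)"
  then have "x = None \<or> (\<exists>u. x = Some u \<and> sublist u (replicate p a))" unfolding univ_def Facs_def by auto
  then show "x = None \<or> (\<exists>M\<le>p. x = Some (replicate M a))" using sublist_rep by metis
next
  assume "x = None \<or> (\<exists>M\<le>p. x = Some (replicate M a))"
  then show "x \<in> univ (replicate p a)"
  proof
    assume "x = None" then show ?thesis by (simp add: univ_def)
  next
    assume "\<exists>M\<le>p. x = Some (replicate M a)"
    then obtain M where M: "M \<le> p" "x = Some (replicate M a)" by blast
    have "replicate M a \<in> Facs (replicate p a)" unfolding Facs_def using rep_sublist[OF M(1)] by simp
    then show ?thesis unfolding univ_def using M(2) by simp
  qed
qed

lemma cinterp_E: "cinterp w None = Some []" by (simp add: cinterp_def)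
lemma cinterp_A: "p \<ge> 1 \<Longrightarrow> cinterp (replicate p a) (Some a) = Some [a]" by (simp add: cinterp_def)

lemma ext_univ:
  assumes "set ms \<subseteq> univ (replicate p a)" "I \<in> idxs (length ms)" "p \<ge> 1"
  shows "ext (replicate p a) ms I \<in> univ (replicate p a)"
proof (cases I)
  case (Inl i) then show ?thesis using assms by (auto simp: ext_def idxs_iff)
next
  case (Inr c)
  show ?thesis
  proof (cases c)
    case None then show ?thesis using Inr by (auto simp: ext_def cinterp_def univ_rep)
  next
    case (Some b)
    have "cinterp (replicate p a) (Some b) = None \<or> cinterp (replicate p a) (Some b) = Some (replicate 1 a)"
      by (auto simp: cinterp_def)
    then show ?thesis using Inr Some assms(3) unfolding univ_rep by (auto simp: ext_def)
  qed
qed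

lemma rep_app: "replicate X a = replicate Y a @ replicate Z a \<longleftrightarrow> X = Y + Z"
  by (metis length_append length_replicate replicate_add)

lemma cr_univ:
  assumes "x \<in> univ (replicate p a)" "y \<in> univ (replicate p a)" "z \<in> univ (replicate p a)"
  shows "concat_rel x y z \<longleftrightarrow> (\<exists>X Y Z. x = Some (replicate X a) \<and> y = Some (replicate Y a) \<and> z = Some (replicate Z a) \<and> X = Y + Z)"
proof
  assume "concat_rel x y z"
  then obtain x' y' z' where e: "x = Some x'" "y = Some y'" "z = Some z'" "x' = y' @ z'" unfolding concat_rel_def by blast
  obtain X where X: "x' = replicate X a" using assms(1) e(1) unfolding univ_rep by auto
  obtain Y where Y: "y' = replicate Y a" using assms(2) e(2) unfolding univ_rep by auto
  obtain Z where Z: "z' = replicate Z a" using assms(3) e(3) unfolding univ_rep by auto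
  have "X = Y + Z" using e(4) X Y Z rep_app by metis
  then show "\<exists>X Y Z. x = Some (replicate X a) \<and> y = Some (replicate Y a) \<and> z = Some (replicate Z a) \<and> X = Y + Z"
    using e X Y Z by blast
next
  assume "\<exists>X Y Z. x = Some (replicate X a) \<and> y = Some (replicate Y a) \<and> z = Some (replicate Z a) \<and> X = Y + Z"
  then show "concat_rel x y z" unfolding concat_rel_def by (auto simp: replicate_add)
qed

definition Rc :: "'a \<Rightarrow> int \<Rightarrow> 'a list option \<Rightarrow> 'a list option \<Rightarrow> 'a list option \<Rightarrow> bool" where
  "Rc a c x y z \<longleftrightarrow> (\<exists>X Y Z. x = Some (replicate X a) \<and> y = Some (replicate Y a) \<and> z = Some (replicate Z a) \<and> int X = int Y + int Z + c)"

lemma rep_univ: "M \<le> p \<Longrightarrow> Some (replicate M a) \<in> univ (replicate p a)"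
  unfolding univ_rep by (intro disjI2 exI[of _ M]) simp

lemma Rc0_cr: "Rc a 0 x y z \<Longrightarrow> concat_rel x y z"
proof -
  assume "Rc a 0 x y z"
  then obtain X Y Z where e: "x = Some (replicate X a)" "y = Some (replicate Y a)" "z = Some (replicate Z a)" "int X = int Y + int Z + 0"
    unfolding Rc_def by blast
  then have "X = Y + Z" by linarith
  then have "replicate X a = replicate Y a @ replicate Z a" by (metis replicate_add)
  then show ?thesis using e unfolding concat_rel_def by blast
qed

lemma cr_Rc0: "x \<in> univ (replicate p a) \<Longrightarrow> y \<in> univ (replicate p a) \<Longrightarrow> z \<in> univ (replicate p a) \<Longrightarrow>
   concat_rel x y z \<Longrightarrow> Rc a 0 x y z"
proof -
  assume u: "x \<in> univ (replicate p a)" "y \<in> univ (replicate p a)" "z \<in> univ (replicate p a)" and c: "concat_rel x y z"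
  obtain X Y Z where e: "x = Some (replicate X a)" "y = Some (replicate Y a)" "z = Some (replicate Z a)" "X = Y + Z"
    using cr_univ[OF u] c by blast
  then have "int X = int Y + int Z + 0" by simp
  then show ?thesis unfolding Rc_def using e by blast
qed

lemma rep_pred: "n \<ge> 1 \<Longrightarrow> replicate n a = replicate (n - 1) a @ [a]"
  by (cases n) (simp_all add: replicate_append_same)

lemma comb1:
  assumes "Rc a c x t z" "concat_rel t y (Some (replicate 1 a))" "y = None \<or> (\<exists>Y. y = Some (replicate Y a))"
  shows "Rc a (c + 1) x y z"
proof -
  obtain X T Z where e: "x = Some (replicate X a)" "t = Some (replicate T a)" "z = Some (replicate Z a)" "int X = int T + int Z + c"
    using assms(1) unfolding Rc_def by blast
  obtain Y where y: "y = Some (replicate Y a)" using assms(2,3) unfolding concat_rel_def by auto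
  have "replicate T a = replicate Y a @ replicate 1 a" using assms(2) e(2) y unfolding concat_rel_def by auto
  then have "T = Y + 1" using rep_app by metis
  then show ?thesis unfolding Rc_def using e y by (intro exI[of _ X] exI[of _ Y] exI[of _ Z]) auto
qed

lemma comb2:
  assumes "Rc a c x t z" "concat_rel y t (Some (replicate 1 a))"
  shows "Rc a (c - 1) x y z"
proof -
  obtain X T Z where e: "x = Some (replicate X a)" "t = Some (replicate T a)" "z = Some (replicate Z a)" "int X = int T + int Z + c"
    using assms(1) unfolding Rc_def by blast
  have "y = Some (replicate (T + 1) a)" using assms(2) e(2) unfolding concat_rel_def by (auto simp: replicate_add replicate_append_same)
  then show ?thesis unfolding Rc_def using e by (intro exI[of _ X] exI[of _ "T+1"] exI[of _ Z]) auto
qed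

lemma comb3:
  assumes "Rc a c x y t" "concat_rel z t (Some (replicate 1 a))"
  shows "Rc a (c - 1) x y z"
proof -
  obtain X Y T where e: "x = Some (replicate X a)" "y = Some (replicate Y a)" "t = Some (replicate T a)" "int X = int Y + int T + c"
    using assms(1) unfolding Rc_def by blast
  have "z = Some (replicate (T + 1) a)" using assms(2) e(3) unfolding concat_rel_def by (auto simp: replicate_add replicate_append_same)
  then show ?thesis unfolding Rc_def using e by (intro exI[of _ X] exI[of _ Y] exI[of _ "T+1"]) auto
qed

lemma ext_A: "p \<ge> 1 \<Longrightarrow> ext (replicate p a) ms (Inr (Some a)) = Some (replicate 1 a)"
  by (simp add: ext_def cinterp_def)

lemma A_idx: "Inr x \<in> idxs n" by (simp add: idxs_iff)

lemma rel_transfer: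
  assumes "p \<ge> 1" "q \<ge> 1"
  shows "dup_wins r (replicate p a) (replicate q a) ms ms' \<Longrightarrow> set ms \<subseteq> univ (replicate p a) \<Longrightarrow>
    set ms' \<subseteq> univ (replicate q a) \<Longrightarrow> I \<in> idxs (length ms) \<Longrightarrow> J \<in> idxs (length ms) \<Longrightarrow>
    K \<in> idxs (length ms) \<Longrightarrow> - int r \<le> c \<Longrightarrow> c \<le> int r \<Longrightarrow>
    Rc a c (ext (replicate p a) ms I) (ext (replicate p a) ms J) (ext (replicate p a) ms K) \<Longrightarrow>
    Rc a c (ext (replicate q a) ms' I) (ext (replicate q a) ms' J) (ext (replicate q a) ms' K)"
proof (induction r arbitrary: ms ms' I J K c)
  case 0
  let ?P = "replicate p a" and ?Q = "replicate q a"
  have pi: "partial_iso ?P ?Q ms ms'" using dup_wins_pi 0(1) by blast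
  have l: "length ms = length ms'" using pi_len[OF pi] .
  have c: "c = 0" using 0(7,8) by simp
  have "concat_rel (ext ?P ms I) (ext ?P ms J) (ext ?P ms K)"
    using 0(9) unfolding c by (rule Rc0_cr)
  then have cc: "concat_rel (ext ?Q ms' I) (ext ?Q ms' J) (ext ?Q ms' K)" using pi_cc[OF pi 0(4,5,6)] by blast
  have u: "ext ?Q ms' X \<in> univ ?Q" if "X \<in> idxs (length ms)" for X
    using ext_univ[of ms' q a X] 0(3) that l assms(2) by simp
  have "Rc a 0 (ext ?Q ms' I) (ext ?Q ms' J) (ext ?Q ms' K)" by (rule cr_Rc0[OF u u u cc]) (rule 0)+
  then show ?case using c by simp
next
  case (Suc r)
  let ?P = "replicate p a" and ?Q = "replicate q a"
  have pi: "partial_iso ?P ?Q ms ms'" using dup_wins_pi Suc by blast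
  have l: "length ms = length ms'" using pi_len[OF pi] .
  obtain MI MJ MK where M: "ext ?P ms I = Some (replicate MI a)" "ext ?P ms J = Some (replicate MJ a)"
    "ext ?P ms K = Some (replicate MK a)" "int MI = int MJ + int MK + c"
    using Suc.prems unfolding Rc_def by blast
  have MIp: "MI \<le> p" using ext_univ[OF Suc.prems(2,4) assms(1)] M(1) unfolding univ_rep by auto
  have MJp: "MJ \<le> p" using ext_univ[OF Suc.prems(2,5) assms(1)] M(2) unfolding univ_rep by auto
  have MKp: "MK \<le> p" using ext_univ[OF Suc.prems(2,6) assms(1)] M(3) unfolding univ_rep by auto
  let ?T = "Inl (length ms) :: nat + 'a option" and ?A = "Inr (Some a) :: nat + 'a option"
  have uQ: "\<And>I. I \<in> idxs (length ms) \<Longrightarrow> ext ?Q ms' I \<in> univ ?Q" using ext_univ Suc.prems(3) l assms(2) by metis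
  show ?case
  proof (cases "c = 0")
    case True
    have "concat_rel (ext ?P ms I) (ext ?P ms J) (ext ?P ms K)"
    proof (rule Rc0_cr)
      show "Rc a 0 (ext ?P ms I) (ext ?P ms J) (ext ?P ms K)" unfolding Rc_def using M True by blast
    qed
    then have "concat_rel (ext ?Q ms' I) (ext ?Q ms' J) (ext ?Q ms' K)" using pi_cc[OF pi] Suc.prems by blast
    then show ?thesis using cr_Rc0[OF uQ uQ uQ] Suc.prems True by blast
  next
    case False
    have lst: "\<And>t t'. ext ?P (ms @ [t]) ?T = t \<and> ext ?Q (ms' @ [t']) ?T = t'"
      using l ext_last by metis
    have ix: "\<And>t. ?T \<in> idxs (length (ms @ [t])) \<and> ?A \<in> idxs (length (ms @ [t])) \<and>
       I \<in> idxs (length (ms @ [t])) \<and> J \<in> idxs (length (ms @ [t])) \<and> K \<in> idxs (length (ms @ [t]))"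
      using Suc.prems by (simp add: idxs_Suc A_idx idxs_last)
    have eP: "\<And>t X. X \<in> idxs (length ms) \<Longrightarrow> ext ?P (ms @ [t]) X = ext ?P ms X" by (simp add: ext_snoc)
    have eQ: "\<And>t X. X \<in> idxs (length ms) \<Longrightarrow> ext ?Q (ms' @ [t]) X = ext ?Q ms' X" using l by (simp add: ext_snoc)
    have eA: "\<And>t. ext ?P (ms @ [t]) ?A = Some (replicate 1 a) \<and> ext ?Q (ms' @ [t]) ?A = Some (replicate 1 a)"
      using assms by (simp add: ext_A)
    have un: "\<And>t. t \<in> univ ?P \<Longrightarrow> set (ms @ [t]) \<subseteq> univ ?P" using Suc.prems by simp
    have un': "\<And>t. t \<in> univ ?Q \<Longrightarrow> set (ms' @ [t]) \<subseteq> univ ?Q" using Suc.prems by simp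
    have mv: "\<And>t. t \<in> univ ?P \<Longrightarrow> \<exists>t'\<in>univ ?Q. dup_wins r ?P ?Q (ms @ [t]) (ms' @ [t'])"
      using Suc.prems(1) by simp
    show ?thesis
    proof (cases "c > 0")
      case True
      define t where "t = Some (replicate (MJ + 1) a)"
      have tP: "t \<in> univ ?P" unfolding t_def using M(4) MIp True by (intro rep_univ) linarith
      obtain t' where t': "t' \<in> univ ?Q" "dup_wins r ?P ?Q (ms @ [t]) (ms' @ [t'])" using mv[OF tP] by blast
      have pi2: "partial_iso ?P ?Q (ms @ [t]) (ms' @ [t'])" using dup_wins_pi t' by blast
      have "concat_rel (ext ?P (ms @ [t]) ?T) (ext ?P (ms @ [t]) J) (ext ?P (ms @ [t]) ?A)"
        using lst eA eP[OF Suc.prems(5)] M(2) unfolding t_def concat_rel_def by (simp add: replicate_append_same)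
      then have "concat_rel (ext ?Q (ms' @ [t']) ?T) (ext ?Q (ms' @ [t']) J) (ext ?Q (ms' @ [t']) ?A)"
        using pi_cc[OF pi2] ix by blast
      then have c1: "concat_rel t' (ext ?Q ms' J) (Some (replicate 1 a))" using lst eA eQ[OF Suc.prems(5)] by simp
      have "Rc a (c - 1) (ext ?P ms I) t (ext ?P ms K)" unfolding Rc_def t_def using M
        by (intro exI[of _ MI] exI[of _ "MJ+1"] exI[of _ MK]) auto
      then have "Rc a (c - 1) (ext ?P (ms @ [t]) I) (ext ?P (ms @ [t]) ?T) (ext ?P (ms @ [t]) K)"
        using lst eP Suc.prems(4,6) by simp
      then have "Rc a (c - 1) (ext ?Q (ms' @ [t']) I) (ext ?Q (ms' @ [t']) ?T) (ext ?Q (ms' @ [t']) K)"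
        using Suc.IH[OF t'(2) un[OF tP] un'[OF t'(1)]] ix Suc.prems(7,8) True by simp
      then have "Rc a (c - 1) (ext ?Q ms' I) t' (ext ?Q ms' K)" using lst eQ Suc.prems by simp
      from comb1[OF this c1] show ?thesis using uQ[OF Suc.prems(5)] unfolding univ_rep by auto
    next
      case False
      then have cn: "c < 0" using \<open>c \<noteq> 0\<close> by simp
      show ?thesis
      proof (cases "MJ \<ge> 1")
        case True
        define t where "t = Some (replicate (MJ - 1) a)"
        have tP: "t \<in> univ ?P" unfolding t_def using MJp by (intro rep_univ) linarith
        obtain t' where t': "t' \<in> univ ?Q" "dup_wins r ?P ?Q (ms @ [t]) (ms' @ [t'])" using mv[OF tP] by blast
        have pi2: "partial_iso ?P ?Q (ms @ [t]) (ms' @ [t'])" using dup_wins_pi t' by blast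
        have "concat_rel (ext ?P (ms @ [t]) J) (ext ?P (ms @ [t]) ?T) (ext ?P (ms @ [t]) ?A)"
          using lst eA eP[OF Suc.prems(5)] M(2) True rep_pred[of MJ a] unfolding t_def concat_rel_def by simp
        then have "concat_rel (ext ?Q (ms' @ [t']) J) (ext ?Q (ms' @ [t']) ?T) (ext ?Q (ms' @ [t']) ?A)"
          using pi_cc[OF pi2] ix by blast
        then have c1: "concat_rel (ext ?Q ms' J) t' (Some (replicate 1 a))" using lst eA eQ[OF Suc.prems(5)] by simp
        have "Rc a (c + 1) (ext ?P ms I) t (ext ?P ms K)" unfolding Rc_def t_def using M True
          by (intro exI[of _ MI] exI[of _ "MJ-1"] exI[of _ MK]) auto
        then have "Rc a (c + 1) (ext ?P (ms @ [t]) I) (ext ?P (ms @ [t]) ?T) (ext ?P (ms @ [t]) K)"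
          using lst eP Suc.prems(4,6) by simp
        then have "Rc a (c + 1) (ext ?Q (ms' @ [t']) I) (ext ?Q (ms' @ [t']) ?T) (ext ?Q (ms' @ [t']) K)"
          using Suc.IH[OF t'(2) un[OF tP] un'[OF t'(1)]] ix Suc.prems(7,8) cn by simp
        then have "Rc a (c + 1) (ext ?Q ms' I) t' (ext ?Q ms' K)" using lst eQ Suc.prems by simp
        from comb2[OF this c1] show ?thesis by simp
      next
        case False
        then have MK1: "MK \<ge> 1" using M(4) cn by linarith
        define t where "t = Some (replicate (MK - 1) a)"
        have tP: "t \<in> univ ?P" unfolding t_def using MKp by (intro rep_univ) linarith
        obtain t' where t': "t' \<in> univ ?Q" "dup_wins r ?P ?Q (ms @ [t]) (ms' @ [t'])" using mv[OF tP] by blast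
        have pi2: "partial_iso ?P ?Q (ms @ [t]) (ms' @ [t'])" using dup_wins_pi t' by blast
        have "concat_rel (ext ?P (ms @ [t]) K) (ext ?P (ms @ [t]) ?T) (ext ?P (ms @ [t]) ?A)"
          using lst eA eP[OF Suc.prems(6)] M(3) MK1 rep_pred[of MK a] unfolding t_def concat_rel_def by simp
        then have "concat_rel (ext ?Q (ms' @ [t']) K) (ext ?Q (ms' @ [t']) ?T) (ext ?Q (ms' @ [t']) ?A)"
          using pi_cc[OF pi2] ix by blast
        then have c1: "concat_rel (ext ?Q ms' K) t' (Some (replicate 1 a))" using lst eA eQ[OF Suc.prems(6)] by simp
        have "Rc a (c + 1) (ext ?P ms I) (ext ?P ms J) t" unfolding Rc_def t_def using M MK1
          by (intro exI[of _ MI] exI[of _ "MJ"] exI[of _ "MK-1"]) auto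
        then have "Rc a (c + 1) (ext ?P (ms @ [t]) I) (ext ?P (ms @ [t]) J) (ext ?P (ms @ [t]) ?T)"
          using lst eP Suc.prems(4,5) by simp
        then have "Rc a (c + 1) (ext ?Q (ms' @ [t']) I) (ext ?Q (ms' @ [t']) J) (ext ?Q (ms' @ [t']) ?T)"
          using Suc.IH[OF t'(2) un[OF tP] un'[OF t'(1)]] ix Suc.prems(7,8) cn by simp
        then have "Rc a (c + 1) (ext ?Q ms' I) (ext ?Q ms' J) t'" using lst eQ Suc.prems by simp
        from comb3[OF this c1] show ?thesis by simp
      qed
    qed
  qed
qed




lemma ubasic_None:
  assumes pi: "partial_iso P Q ms ms'" and I: "I \<in> idxs (length ms)"
  shows "ext P ms I = None \<longleftrightarrow> ext Q ms' I = None"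
proof -
  let ?E = "Inr None :: nat + 'a option"
  have E: "?E \<in> idxs (length ms)" by (rule A_idx)
  have eP: "ext P ms ?E = Some []" "ext Q ms' ?E = Some []" by (simp_all add: ext_def cinterp_def)
  have h: "\<And>x. concat_rel x x (Some []) \<longleftrightarrow> x \<noteq> None" by (auto simp: concat_rel_def)
  have "concat_rel (ext P ms I) (ext P ms I) (ext P ms ?E) \<longleftrightarrow> concat_rel (ext Q ms' I) (ext Q ms' I) (ext Q ms' ?E)"
    using pi_cc[OF pi I I E] .
  then show ?thesis unfolding eP h by blast
qed

lemma ubasic_min:
  assumes pq: "p \<ge> 1" "q \<ge> 1" and pi: "partial_iso (replicate p a) (replicate q a) ms ms'" and I: "I \<in> idxs (length ms)"
    and x: "ext (replicate p a) ms I = Some (replicate M a)" and y: "ext (replicate q a) ms' I = Some (replicate M' a)"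
  shows "min M 3 = min M' 3"
proof -
  let ?E = "Inr None :: nat + 'a option" and ?A = "Inr (Some a) :: nat + 'a option"
  let ?P = "replicate p a" and ?Q = "replicate q a"
  have E: "?E \<in> idxs (length ms)" "?A \<in> idxs (length ms)" by (rule A_idx)+
  have eE: "ext ?P ms ?E = Some (replicate 0 a)" "ext ?Q ms' ?E = Some (replicate 0 a)" by (simp_all add: ext_def cinterp_def)
  have eA: "ext ?P ms ?A = Some (replicate 1 a)" "ext ?Q ms' ?A = Some (replicate 1 a)" using pq by (simp_all add: ext_A)
  have r0: "M = 0 \<longleftrightarrow> M' = 0"
    using pi_eq[OF pi I E(1)] unfolding x y eE by simp
  have r1: "M = 1 \<longleftrightarrow> M' = 1"
    using pi_eq[OF pi I E(2)] unfolding x y eA by (simp only: option.inject replicate_eq_replicate) simp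
  have cc: "\<And>N. concat_rel (Some (replicate N a)) (Some (replicate 1 a)) (Some (replicate 1 a)) \<longleftrightarrow> N = 2"
  proof -
    fix N
    have "concat_rel (Some (replicate N a)) (Some (replicate 1 a)) (Some (replicate 1 a)) \<longleftrightarrow>
       replicate N a = replicate 1 a @ replicate 1 a" unfolding concat_rel_def by blast
    also have "\<dots> \<longleftrightarrow> N = 2" using rep_app[of N a 1 1] by (simp add: numeral_2_eq_2)
    finally show "concat_rel (Some (replicate N a)) (Some (replicate 1 a)) (Some (replicate 1 a)) \<longleftrightarrow> N = 2" .
  qed
  have r2: "M = 2 \<longleftrightarrow> M' = 2"
    using pi_cc[OF pi I E(2) E(2)] unfolding x y eA cc .
  show ?thesis
  proof (cases "M \<le> 2")
    case True
    then have "M = 0 \<or> M = 1 \<or> M = 2" by linarith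
    then have "M' = M" using r0 r1 r2 by metis
    then show ?thesis by simp
  next
    case False
    then have "M \<noteq> 0" "M \<noteq> 1" "M \<noteq> 2" by linarith+
    then have "M' \<noteq> 0" "M' \<noteq> 1" "M' \<noteq> 2" using r0 r1 r2 by blast+
    then have "M' \<ge> 3" by linarith
    then show ?thesis using False by simp
  qed
qed

definition decd :: "'a list \<Rightarrow> nat \<times> nat \<Rightarrow> 'a list option \<Rightarrow> 'a list option" where
  "decd w d m = (case m of None \<Rightarrow> None | Some s \<Rightarrow> Some (fac w (fst d) (LL w (fst d) (snd d) (length s))))"

definition cok :: "'a list \<Rightarrow> nat \<times> nat \<Rightarrow> 'a list option \<Rightarrow> bool" where
  "cok w d m \<longleftrightarrow> (\<forall>s. m = Some s \<longrightarrow> canon w (fst d) (snd d) (length s))"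

definition isrep :: "'a \<Rightarrow> 'a list option \<Rightarrow> bool" where
  "isrep a m \<longleftrightarrow> m = None \<or> (\<exists>M. m = Some (replicate M a))"

lemma val_eq:
  assumes w: "w \<noteq> []"
    and c: "cok w dI uI" "cok w dJ uJ" "cok w dI uI'" "cok w dJ uJ'"
    and r: "isrep a uI" "isrep a uJ" "isrep a uI'" "isrep a uJ'"
    and nI: "uI = None \<longleftrightarrow> uI' = None" and nJ: "uJ = None \<longleftrightarrow> uJ' = None"
    and e: "uI = uJ \<longleftrightarrow> uI' = uJ'"
  shows "decd w dI uI = decd w dJ uJ \<longleftrightarrow> decd w dI uI' = decd w dJ uJ'"
proof -
  have key: "\<And>x y. cok w dI x \<Longrightarrow> cok w dJ y \<Longrightarrow> isrep a x \<Longrightarrow> isrep a y \<Longrightarrow> x \<noteq> None \<Longrightarrow> y \<noteq> None \<Longrightarrow>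
     decd w dI x = decd w dJ y \<longleftrightarrow> dI = dJ \<and> x = y"
  proof -
    fix x y assume a: "cok w dI x" "cok w dJ y" "isrep a x" "isrep a y" "x \<noteq> None" "y \<noteq> None"
    obtain X Y where xy: "x = Some (replicate X a)" "y = Some (replicate Y a)" using a(3-6) unfolding isrep_def by auto
    have cX: "canon w (fst dI) (snd dI) X" and cY: "canon w (fst dJ) (snd dJ) Y" using a(1,2) xy unfolding cok_def by auto
    show "decd w dI x = decd w dJ y \<longleftrightarrow> dI = dJ \<and> x = y"
    proof
      assume "decd w dI x = decd w dJ y"
      then have "fac w (fst dI) (LL w (fst dI) (snd dI) X) = fac w (fst dJ) (LL w (fst dJ) (snd dJ) Y)"
        using xy unfolding decd_def by simp
      then have "fst dI = fst dJ \<and> snd dI = snd dJ \<and> X = Y" using canon_inj[OF cX cY] unfolding LL_def by blast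
      then show "dI = dJ \<and> x = y" using xy by (simp add: prod_eq_iff)
    qed auto
  qed
  show ?thesis
  proof (cases "uI = None \<or> uJ = None")
    case True
    then show ?thesis using nI nJ unfolding decd_def by (auto split: option.splits)
  next
    case False
    then show ?thesis using key[OF c(1,2) r(1,2)] key[OF c(3,4) r(3,4)] nI nJ e by auto
  qed
qed

lemma val_cc:
  assumes w: "w \<noteq> []"
    and c: "cok w dI uI" "cok w dJ uJ" "cok w dK uK" "cok w dI uI'" "cok w dJ uJ'" "cok w dK uK'"
    and r: "isrep a uI" "isrep a uJ" "isrep a uK" "isrep a uI'" "isrep a uJ'" "isrep a uK'"
    and nI: "uI = None \<longleftrightarrow> uI' = None" and nJ: "uJ = None \<longleftrightarrow> uJ' = None" and nK: "uK = None \<longleftrightarrow> uK' = None"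
    and mJ: "\<And>M M'. uJ = Some (replicate M a) \<Longrightarrow> uJ' = Some (replicate M' a) \<Longrightarrow> min M 3 = min M' 3"
    and mK: "\<And>M M'. uK = Some (replicate M a) \<Longrightarrow> uK' = Some (replicate M' a) \<Longrightarrow> min M 3 = min M' 3"
    and R: "\<And>c. -3 \<le> c \<Longrightarrow> c \<le> 1 \<Longrightarrow> Rc a c uI uJ uK \<longleftrightarrow> Rc a c uI' uJ' uK'"
  shows "concat_rel (decd w dI uI) (decd w dJ uJ) (decd w dK uK) \<longleftrightarrow> concat_rel (decd w dI uI') (decd w dJ uJ') (decd w dK uK')"
proof (cases "uI = None \<or> uJ = None \<or> uK = None")
  case True
  then show ?thesis using nI nJ nK unfolding decd_def concat_rel_def by auto
next
  case False
  obtain MI MJ MK where M: "uI = Some (replicate MI a)" "uJ = Some (replicate MJ a)" "uK = Some (replicate MK a)"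
    using False r(1-3) unfolding isrep_def by auto
  obtain MI' MJ' MK' where M': "uI' = Some (replicate MI' a)" "uJ' = Some (replicate MJ' a)" "uK' = Some (replicate MK' a)"
    using False r(4-6) nI nJ nK unfolding isrep_def by auto
  obtain iI gI iJ gJ iK gK where d: "dI = (iI, gI)" "dJ = (iJ, gJ)" "dK = (iK, gK)" by (metis prod.exhaust)
  have cs: "canon w iI gI MI" "canon w iI gI MI'" "canon w iJ gJ MJ" "canon w iJ gJ MJ'" "canon w iK gK MK" "canon w iK gK MK'"
    using c M M' d unfolding cok_def by auto
  have RR: "\<forall>c::int. -3 \<le> c \<and> c \<le> 1 \<longrightarrow> (int MI = int MJ + int MK + c \<longleftrightarrow> int MI' = int MJ' + int MK' + c)"
    using R M M' unfolding Rc_def by auto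
  have "concat_rel (decd w dI uI) (decd w dJ uJ) (decd w dK uK) \<longleftrightarrow>
        fac w iI (LL w iI gI MI) = fac w iJ (LL w iJ gJ MJ) @ fac w iK (LL w iK gK MK)"
    using M d unfolding decd_def concat_rel_def by simp
  also have "\<dots> \<longleftrightarrow> fac w iI (LL w iI gI MI') = fac w iJ (LL w iJ gJ MJ') @ fac w iK (LL w iK gK MK')"
    by (rule core_concat[OF w cs mJ[OF M(2) M'(2)] mK[OF M(3) M'(3)] RR])
  also have "\<dots> \<longleftrightarrow> concat_rel (decd w dI uI') (decd w dJ uJ') (decd w dK uK')"
    using M' d unfolding decd_def concat_rel_def by simp
  finally show ?thesis .
qed




definition fidx :: "'a list \<Rightarrow> 'a \<Rightarrow> nat + 'a option \<Rightarrow> nat + 'a option" where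
  "fidx w a I = (case I of Inl i \<Rightarrow> Inl i | Inr None \<Rightarrow> Inr None
     | Inr (Some b) \<Rightarrow> (if b \<in> set w then Inr (Some a) else Inr (Some (if b \<noteq> a then b else hd w))))"

definition fst_occ :: "'a list \<Rightarrow> 'a \<Rightarrow> nat" where
  "fst_occ w b = (LEAST i. w ! i = b)"

definition Didx :: "'a list \<Rightarrow> (nat \<times> nat) list \<Rightarrow> nat + 'a option \<Rightarrow> nat \<times> nat" where
  "Didx w ds I = (case I of Inl i \<Rightarrow> ds ! i | Inr None \<Rightarrow> (0, 0)
     | Inr (Some b) \<Rightarrow> (fst_occ w b, length w - 1 - fst_occ w b))"

definition dec :: "'a list \<Rightarrow> (nat \<times> nat) list \<Rightarrow> 'a list option list \<Rightarrow> 'a list option list" where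
  "dec w ds ms = map (\<lambda>i. decd w (ds ! i) (ms ! i)) [0..<length ms]"

lemma dec_len[simp]: "length (dec w ds ms) = length ms" by (simp add: dec_def)

lemma dec_nth: "i < length ms \<Longrightarrow> dec w ds ms ! i = decd w (ds ! i) (ms ! i)" by (simp add: dec_def)

lemma dec_snoc: "length ds = length ms \<Longrightarrow> dec w (ds @ [d]) (ms @ [m]) = dec w ds ms @ [decd w d m]"
  by (simp add: dec_def nth_append)

lemma dec_Nil: "dec w [] [] = []" by (simp add: dec_def)

lemma set_wpow: "p \<ge> 1 \<Longrightarrow> set (wpow w p) = set w"
proof (induction p)
  case (Suc p)
  then show ?case by (cases "p = 0") (auto simp: wpow_def)
qed simp

lemma fst_occ:
  assumes "b \<in> set w"
  shows "fst_occ w b < length w" "w ! fst_occ w b = b" "\<And>i. i < fst_occ w b \<Longrightarrow> w ! i \<noteq> b"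
proof -
  obtain j where j: "j < length w" "w ! j = b" using assms by (auto simp: in_set_conv_nth)
  show "w ! fst_occ w b = b" unfolding fst_occ_def using j(2) by (rule LeastI)
  have "fst_occ w b \<le> j" unfolding fst_occ_def using j(2) by (rule Least_le)
  then show "fst_occ w b < length w" using j(1) by simp
  show "\<And>i. i < fst_occ w b \<Longrightarrow> w ! i \<noteq> b" unfolding fst_occ_def using not_less_Least by blast
qed

lemma fac1: "i < length w \<Longrightarrow> fac w i 1 = [w ! i]"
  by (simp add: fac_def)

lemma fac1': "i < length w \<Longrightarrow> fac w i (Suc 0) = [w ! i]"
  by (simp add: fac_def)

lemma map_facts:
  assumes w: "w \<noteq> []" and p: "p \<ge> 1" and I: "I \<in> idxs (length ms)"
    and u: "set ms \<subseteq> univ (replicate p a)" and ld: "length ds = length ms"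
    and ck: "\<forall>i<length ms. cok w (ds ! i) (ms ! i)"
  shows "ext (wpow w p) (dec w ds ms) I = decd w (Didx w ds I) (ext (replicate p a) ms (fidx w a I))"
    and "fidx w a I \<in> idxs (length ms)"
    and "cok w (Didx w ds I) (ext (replicate p a) ms (fidx w a I))"
    and "isrep a (ext (replicate p a) ms (fidx w a I))"
proof -
  show fi: "fidx w a I \<in> idxs (length ms)" using I by (auto simp: fidx_def idxs_iff split: sum.splits option.splits)
  show "isrep a (ext (replicate p a) ms (fidx w a I))"
    using ext_univ[OF u fi p] unfolding univ_rep isrep_def by auto
  have "ext (wpow w p) (dec w ds ms) I = decd w (Didx w ds I) (ext (replicate p a) ms (fidx w a I)) \<and>
        cok w (Didx w ds I) (ext (replicate p a) ms (fidx w a I))"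
  proof (cases I)
    case (Inl i)
    then have "i < length ms" using I by (simp add: idxs_iff)
    then show ?thesis using Inl ck by (simp add: ext_def fidx_def Didx_def dec_nth)
  next
    case (Inr c)
    show ?thesis
    proof (cases c)
      case None
      have "canon w 0 0 0" using w unfolding canon_def by simp
      then show ?thesis using Inr None
        by (simp add: ext_def fidx_def Didx_def cinterp_def decd_def LL_def fac_def cok_def)
    next
      case (Some b)
      show ?thesis
      proof (cases "b \<in> set w")
        case True
        let ?i = "fst_occ w b"
        have o: "?i < length w" "w ! ?i = b" "\<And>j. j < ?i \<Longrightarrow> w ! j \<noteq> b" using fst_occ[OF True] by auto
        have L: "LL w ?i (length w - 1 - ?i) 1 = 1" using o(1) unfolding LL_def by simp
        have c1: "cinterp (wpow w p) (Some b) = Some [b]" using True set_wpow[OF p, of w] by (simp add: cinterp_def)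
        have c2: "ext (replicate p a) ms (fidx w a I) = Some [a]"
          using Inr Some True p by (simp add: ext_def fidx_def cinterp_def)
        have dd: "decd w (Didx w ds I) (Some [a]) = Some [b]"
          using Inr Some L o by (simp add: decd_def Didx_def fac1 fac1')
        have "canon w ?i (length w - 1 - ?i) 1"
          unfolding canon_def
        proof (intro conjI allI impI)
          show "?i < length w" by (rule o(1))
          show "length w - 1 - ?i < length w" using o(1) by simp
          show "?i + (length w - 1 - ?i) \<le> 1 * length w" using o(1) by simp
          fix j assume "j < ?i"
          then show "fac w j (1 * length w - ?i - (length w - 1 - ?i)) \<noteq> fac w ?i (1 * length w - ?i - (length w - 1 - ?i))"
            using L o unfolding LL_def by (simp add: fac1 fac1')
        qed
        then have "cok w (Didx w ds I) (Some [a])" using Inr Some by (simp add: cok_def Didx_def)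
        then show ?thesis using c1 c2 dd Inr Some by (simp add: ext_def)
      next
        case False
        have ne: "(if b \<noteq> a then b else hd w) \<noteq> a" using False w by (auto simp: hd_in_set)
        have c1: "cinterp (wpow w p) (Some b) = None" using False set_wpow[OF p, of w] by (simp add: cinterp_def)
        have c2: "ext (replicate p a) ms (fidx w a I) = None"
          using Inr Some False ne by (simp add: ext_def fidx_def cinterp_def)
        show ?thesis using c1 c2 Inr Some by (simp add: ext_def decd_def cok_def)
      qed
    qed
  qed
  then show "ext (wpow w p) (dec w ds ms) I = decd w (Didx w ds I) (ext (replicate p a) ms (fidx w a I))"
    and "cok w (Didx w ds I) (ext (replicate p a) ms (fidx w a I))" by auto
qed




lemma base:
  assumes w: "w \<noteq> []" and p: "p \<ge> 1" and q: "q \<ge> 1"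
    and dw: "dup_wins 3 (replicate p a) (replicate q a) ms ms'"
    and u: "set ms \<subseteq> univ (replicate p a)" and u': "set ms' \<subseteq> univ (replicate q a)"
    and ld: "length ds = length ms" and lm: "length ms' = length ms"
    and ck: "\<forall>i<length ms. cok w (ds ! i) (ms ! i)" and ck': "\<forall>i<length ms. cok w (ds ! i) (ms' ! i)"
  shows "partial_iso (wpow w p) (wpow w q) (dec w ds ms) (dec w ds ms')"
proof -
  let ?P = "replicate p a" and ?Q = "replicate q a"
  have pi: "partial_iso ?P ?Q ms ms'" using dup_wins_pi[OF dw] .
  have dw': "dup_wins 3 ?Q ?P ms' ms" using dup_wins_sym[OF dw] .
  have ld': "length ds = length ms'" using ld lm by simp
  have ck2: "\<forall>i<length ms'. cok w (ds ! i) (ms' ! i)" using ck' lm by simp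
  note mp = map_facts[OF w p _ u ld ck]
  note mq = map_facts[OF w q _ u' ld' ck2]
  show ?thesis unfolding partial_iso_def
  proof (rule conjI, simp add: lm, intro ballI)
    fix I J K :: "nat + 'a option"
    assume IJK: "I \<in> idxs (length (dec w ds ms))" "J \<in> idxs (length (dec w ds ms))" "K \<in> idxs (length (dec w ds ms))"
    then have X: "I \<in> idxs (length ms)" "J \<in> idxs (length ms)" "K \<in> idxs (length ms)" by simp_all
    then have X': "I \<in> idxs (length ms')" "J \<in> idxs (length ms')" "K \<in> idxs (length ms')" using lm by simp_all
    have fX: "fidx w a I \<in> idxs (length ms)" "fidx w a J \<in> idxs (length ms)" "fidx w a K \<in> idxs (length ms)"
      using mp(2) X by blast+
    have fX': "fidx w a I \<in> idxs (length ms')" "fidx w a J \<in> idxs (length ms')" "fidx w a K \<in> idxs (length ms')"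
      using fX lm by simp_all
    have u3: "set ms \<subseteq> univ ?P" "set ms' \<subseteq> univ ?Q" by (rule u, rule u')
    have eqv: "ext (wpow w p) (dec w ds ms) I = ext (wpow w p) (dec w ds ms) J \<longleftrightarrow>
          ext (wpow w q) (dec w ds ms') I = ext (wpow w q) (dec w ds ms') J"
      unfolding mp(1)[OF X(1)] mp(1)[OF X(2)] mq(1)[OF X'(1)] mq(1)[OF X'(2)]
      by (rule val_eq[OF w mp(3)[OF X(1)] mp(3)[OF X(2)] mq(3)[OF X'(1)] mq(3)[OF X'(2)]
            mp(4)[OF X(1)] mp(4)[OF X(2)] mq(4)[OF X'(1)] mq(4)[OF X'(2)]
            ubasic_None[OF pi fX(1)] ubasic_None[OF pi fX(2)] pi_eq[OF pi fX(1) fX(2)]])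
    have R: "Rc a c (ext ?P ms (fidx w a I)) (ext ?P ms (fidx w a J)) (ext ?P ms (fidx w a K)) \<longleftrightarrow>
             Rc a c (ext ?Q ms' (fidx w a I)) (ext ?Q ms' (fidx w a J)) (ext ?Q ms' (fidx w a K))"
      if "-3 \<le> c" "c \<le> 1" for c
    proof
      assume "Rc a c (ext ?P ms (fidx w a I)) (ext ?P ms (fidx w a J)) (ext ?P ms (fidx w a K))"
      then show "Rc a c (ext ?Q ms' (fidx w a I)) (ext ?Q ms' (fidx w a J)) (ext ?Q ms' (fidx w a K))"
        using rel_transfer[OF p q dw u u' fX] that by simp
    next
      assume "Rc a c (ext ?Q ms' (fidx w a I)) (ext ?Q ms' (fidx w a J)) (ext ?Q ms' (fidx w a K))"
      then show "Rc a c (ext ?P ms (fidx w a I)) (ext ?P ms (fidx w a J)) (ext ?P ms (fidx w a K))"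
        using rel_transfer[OF q p dw' u' u fX'] that by simp
    qed
    have ccv: "concat_rel (ext (wpow w p) (dec w ds ms) I) (ext (wpow w p) (dec w ds ms) J) (ext (wpow w p) (dec w ds ms) K) \<longleftrightarrow>
          concat_rel (ext (wpow w q) (dec w ds ms') I) (ext (wpow w q) (dec w ds ms') J) (ext (wpow w q) (dec w ds ms') K)"
      unfolding mp(1)[OF X(1)] mp(1)[OF X(2)] mp(1)[OF X(3)] mq(1)[OF X'(1)] mq(1)[OF X'(2)] mq(1)[OF X'(3)]
      by (rule val_cc[OF w mp(3)[OF X(1)] mp(3)[OF X(2)] mp(3)[OF X(3)] mq(3)[OF X'(1)] mq(3)[OF X'(2)] mq(3)[OF X'(3)]
            mp(4)[OF X(1)] mp(4)[OF X(2)] mp(4)[OF X(3)] mq(4)[OF X'(1)] mq(4)[OF X'(2)] mq(4)[OF X'(3)]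
            ubasic_None[OF pi fX(1)] ubasic_None[OF pi fX(2)] ubasic_None[OF pi fX(3)]
            ubasic_min[OF p q pi fX(2)] ubasic_min[OF p q pi fX(3)] R])
    show "(ext (wpow w p) (dec w ds ms) I = ext (wpow w p) (dec w ds ms) J \<longleftrightarrow>
          ext (wpow w q) (dec w ds ms') I = ext (wpow w q) (dec w ds ms') J) \<and>
         (concat_rel (ext (wpow w p) (dec w ds ms) I) (ext (wpow w p) (dec w ds ms) J) (ext (wpow w p) (dec w ds ms) K) \<longleftrightarrow>
          concat_rel (ext (wpow w q) (dec w ds ms') I) (ext (wpow w q) (dec w ds ms') J) (ext (wpow w q) (dec w ds ms') K))"
      using eqv ccv by blast
  qed
qed

definition Inv :: "'a list \<Rightarrow> 'a \<Rightarrow> nat \<Rightarrow> nat \<Rightarrow> nat \<Rightarrow> (nat \<times> nat) list \<Rightarrow> 'a list option list \<Rightarrow> 'a list option list \<Rightarrow> bool" where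
  "Inv w a p q j ds ms ms' \<longleftrightarrow> dup_wins (j + 3) (replicate p a) (replicate q a) ms ms' \<and>
     set ms \<subseteq> univ (replicate p a) \<and> set ms' \<subseteq> univ (replicate q a) \<and>
     length ds = length ms \<and> length ms' = length ms \<and>
     (\<forall>i<length ms. cok w (ds ! i) (ms ! i)) \<and> (\<forall>i<length ms. cok w (ds ! i) (ms' ! i))"

lemma Inv_sym: "Inv w a p q j ds ms ms' \<Longrightarrow> Inv w a q p j ds ms' ms"
  unfolding Inv_def using dup_wins_sym by fastforce

lemma extend:
  assumes w: "w \<noteq> []" and p: "p \<ge> 1" and q: "q \<ge> 1"
    and I: "Inv w a p q (Suc j) ds ms ms'" and x: "x \<in> univ (wpow w p)"
  shows "\<exists>d m m'. x = decd w d m \<and> decd w d m' \<in> univ (wpow w q) \<and> Inv w a p q j (ds @ [d]) (ms @ [m]) (ms' @ [m'])"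
proof -
  let ?P = "replicate p a" and ?Q = "replicate q a"
  have enc: "\<exists>d m. x = decd w d m \<and> m \<in> univ ?P \<and> cok w d m"
  proof (cases x)
    case None
    then show ?thesis by (intro exI[of _ "(0,0)"] exI[of _ None]) (simp add: decd_def univ_def cok_def)
  next
    case (Some u)
    then have "sublist u (wpow w p)" using x unfolding univ_def Facs_def by auto
    then obtain i g M where e: "canon w i g M" "M \<le> p" "u = fac w i (M * length w - i - g)"
      using encode[OF w] by blast
    show ?thesis
      by (intro exI[of _ "(i,g)"] exI[of _ "Some (replicate M a)"])
        (simp add: Some e decd_def LL_def cok_def rep_univ)
  qed
  then obtain d m where dm: "x = decd w d m" "m \<in> univ ?P" "cok w d m" by blast
  have dw: "dup_wins (Suc (j + 3)) ?P ?Q ms ms'" using I unfolding Inv_def by simp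
  then obtain m' where m': "m' \<in> univ ?Q" "dup_wins (j + 3) ?P ?Q (ms @ [m]) (ms' @ [m'])"
    using dm(2) unfolding dup_wins.simps(2) by blast
  have pi2: "partial_iso ?P ?Q (ms @ [m]) (ms' @ [m'])" using dup_wins_pi[OF m'(2)] .
  have lm: "length ms' = length ms" using I unfolding Inv_def by simp
  let ?T = "Inl (length ms) :: nat + 'a option"
  have T: "?T \<in> idxs (length (ms @ [m]))" by (simp add: idxs_iff)
  have eT: "ext ?P (ms @ [m]) ?T = m" "ext ?Q (ms' @ [m']) ?T = m'" using lm ext_last by metis+
  have nn: "m = None \<longleftrightarrow> m' = None" using ubasic_None[OF pi2 T] eT by simp
  have ck': "cok w d m'"
  proof (cases m')
    case (Some s')
    then obtain M' where M': "m' = Some (replicate M' a)" using m'(1) unfolding univ_rep by auto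
    then obtain M where M: "m = Some (replicate M a)" using dm(2) nn unfolding univ_rep by auto
    have "min M 3 = min M' 3" using ubasic_min[OF p q pi2 T] eT M M' by simp
    moreover have "canon w (fst d) (snd d) M" using dm(3) M unfolding cok_def by simp
    ultimately have "canon w (fst d) (snd d) M'" using canon_transfer[OF w] by blast
    then show ?thesis using M' unfolding cok_def by simp
  qed (simp add: cok_def)
  have yu: "decd w d m' \<in> univ (wpow w q)"
  proof (cases m')
    case None then show ?thesis by (simp add: decd_def univ_def)
  next
    case (Some s')
    then obtain M' where M': "m' = Some (replicate M' a)" "M' \<le> q" using m'(1) unfolding univ_rep by auto
    have c: "canon w (fst d) (snd d) M'" using ck' M' unfolding cok_def by simp
    have "fst d + LL w (fst d) (snd d) M' \<le> M' * length w" using c unfolding canon_def LL_def by linarith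
    also have "\<dots> \<le> q * length w" using M'(2) by simp
    finally have "sublist (fac w (fst d) (LL w (fst d) (snd d) M')) (wpow w q)" by (rule fac_sublist)
    then show ?thesis using M' unfolding decd_def univ_def Facs_def by simp
  qed
  have "Inv w a p q j (ds @ [d]) (ms @ [m]) (ms' @ [m'])"
    unfolding Inv_def
  proof (intro conjI)
    show "dup_wins (j + 3) ?P ?Q (ms @ [m]) (ms' @ [m'])" by (rule m'(2))
    show "set (ms @ [m]) \<subseteq> univ ?P" using I dm(2) unfolding Inv_def by simp
    show "set (ms' @ [m']) \<subseteq> univ ?Q" using I m'(1) unfolding Inv_def by simp
    show "length (ds @ [d]) = length (ms @ [m])" using I unfolding Inv_def by simp
    show "length (ms' @ [m']) = length (ms @ [m])" using lm by simp
    show "\<forall>i<length (ms @ [m]). cok w ((ds @ [d]) ! i) ((ms @ [m]) ! i)"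
      using I dm(3) unfolding Inv_def by (auto simp: nth_append less_Suc_eq)
    show "\<forall>i<length (ms @ [m]). cok w ((ds @ [d]) ! i) ((ms' @ [m']) ! i)"
      using I ck' lm unfolding Inv_def by (auto simp: nth_append less_Suc_eq)
  qed
  then show ?thesis using dm(1) yu by blast
qed

lemma strat:
  assumes w: "w \<noteq> []"
  shows "\<forall>p q ds ms ms'. p \<ge> 1 \<longrightarrow> q \<ge> 1 \<longrightarrow> Inv w a p q j ds ms ms' \<longrightarrow>
           dup_wins j (wpow w p) (wpow w q) (dec w ds ms) (dec w ds ms')"
proof (induction j)
  case 0
  show ?case
  proof (intro allI impI)
    fix p q ds ms ms' assume p: "(p::nat) \<ge> 1" and q: "(q::nat) \<ge> 1" and I: "Inv w a p q 0 ds ms ms'"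
    have h: "dup_wins 3 (replicate p a) (replicate q a) ms ms'" "set ms \<subseteq> univ (replicate p a)"
      "set ms' \<subseteq> univ (replicate q a)" "length ds = length ms" "length ms' = length ms"
      "\<forall>i<length ms. cok w (ds ! i) (ms ! i)" "\<forall>i<length ms. cok w (ds ! i) (ms' ! i)"
      using I unfolding Inv_def by simp_all
    have "partial_iso (wpow w p) (wpow w q) (dec w ds ms) (dec w ds ms')" by (rule base[OF w p q h])
    then show "dup_wins 0 (wpow w p) (wpow w q) (dec w ds ms) (dec w ds ms')" by simp
  qed
next
  case (Suc j)
  show ?case
  proof (intro allI impI)
    fix p q ds ms ms' assume p: "(p::nat) \<ge> 1" and q: "(q::nat) \<ge> 1" and I: "Inv w a p q (Suc j) ds ms ms'"
    have l: "length ds = length ms" "length ds = length ms'" using I unfolding Inv_def by simp_all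
    have c1: "\<exists>y\<in>univ (wpow w q). dup_wins j (wpow w p) (wpow w q) (dec w ds ms @ [x]) (dec w ds ms' @ [y])"
      if x: "x \<in> univ (wpow w p)" for x
    proof -
      obtain d m m' where e: "x = decd w d m" "decd w d m' \<in> univ (wpow w q)" "Inv w a p q j (ds @ [d]) (ms @ [m]) (ms' @ [m'])"
        using extend[OF w p q I x] by blast
      have "dup_wins j (wpow w p) (wpow w q) (dec w (ds @ [d]) (ms @ [m])) (dec w (ds @ [d]) (ms' @ [m']))"
        using Suc.IH p q e(3) by blast
      then show ?thesis using e(1,2) l by (auto simp: dec_snoc)
    qed
    have c2: "\<exists>x\<in>univ (wpow w p). dup_wins j (wpow w p) (wpow w q) (dec w ds ms @ [x]) (dec w ds ms' @ [y])"
      if y: "y \<in> univ (wpow w q)" for y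
    proof -
      obtain d m' m where e: "y = decd w d m'" "decd w d m \<in> univ (wpow w p)" "Inv w a q p j (ds @ [d]) (ms' @ [m']) (ms @ [m])"
        using extend[OF w q p Inv_sym[OF I] y] by blast
      have "dup_wins j (wpow w q) (wpow w p) (dec w (ds @ [d]) (ms' @ [m'])) (dec w (ds @ [d]) (ms @ [m]))"
        using Suc.IH p q e(3) by blast
      then have "dup_wins j (wpow w p) (wpow w q) (dec w (ds @ [d]) (ms @ [m])) (dec w (ds @ [d]) (ms' @ [m']))"
        by (rule dup_wins_sym)
      then show ?thesis using e(1,2) l by (auto simp: dec_snoc)
    qed
    show "dup_wins (Suc j) (wpow w p) (wpow w q) (dec w ds ms) (dec w ds ms')"
      using c1 c2 by simp
  qed
qed

theorem lemma4p8:
  fixes a :: "'a::finite" and p q k :: nat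
  assumes "p \<ge> 1" and "q \<ge> 1" and "k \<ge> 1"
    and "ef_equiv (k + 3) (replicate p a) (replicate q a)"
  shows "\<forall>w :: 'a list. primitive w \<longrightarrow> ef_equiv k (wpow w p) (wpow w q)"
proof (intro allI impI)
  fix w :: "'a list" assume "primitive w"
  then have w: "w \<noteq> []" unfolding primitive_def by simp
  have "Inv w a p q k [] [] []" using assms(4) unfolding Inv_def ef_equiv_def by simp
  then have "dup_wins k (wpow w p) (wpow w q) (dec w [] []) (dec w [] [])"
    using strat[OF w] assms(1,2) by blast
  then show "ef_equiv k (wpow w p) (wpow w q)" unfolding ef_equiv_def dec_Nil .
qed


end
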